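(* The deterministic query complexity of Local Search on the Odd graph satisfies $$D[LS(K(2k+1,k))]\in\Omega\!\left(\frac{1}{k}\binom{2k+1}{k}\right)\quad\text{as } k\to\infty.$$
   Context: The Kneser graph $K(n,k)$ has as vertices the $k$-element subsets of $[n]$, with two vertices adjacent if and only if they are disjoint. Local Search on a finite undirected graph $G=(V,E)$ is as follows. An unknown function $f:V\to\mathbb{R}$ is accessed only through queries: querying $a\in V$ returns $f(a)$, and queries may be adaptive. The algorithm must output a local maximum, i.e. a vertex $a$ with $f(a)\ge f(b)$ for every edge $(a,b)\in E$. $D[LS(G)]$ is the minimum, over deterministic algorithms, of the maximum, over all $f$, of the number of queries used. *)

theory Defs
  imports Complex_Main "HOL-Library.Landau_Symbols"
begin

definition kneser_vertices :: "nat \<Rightarrow> nat \<Rightarrow> nat set set" where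
  "kneser_vertices n k = {A. A \<subseteq> {..<n} \<and> card A = k}"

definition kneser_adj :: "nat set \<Rightarrow> nat set \<Rightarrow> bool" where
  "kneser_adj A B \<longleftrightarrow> A \<inter> B = {}"

definition is_local_max :: "'v set \<Rightarrow> ('v \<Rightarrow> 'v \<Rightarrow> bool) \<Rightarrow> ('v \<Rightarrow> real) \<Rightarrow> 'v \<Rightarrow> bool" where
  "is_local_max V E f a \<longleftrightarrow> a \<in> V \<and> (\<forall>b\<in>V. E a b \<longrightarrow> f b \<le> f a)"

text \<open>Deterministic adaptive query algorithms as decision trees: either output a vertex,
  or query a vertex and continue depending on the returned real value.\<close>
datatype 'v qtree = Output 'v | Query 'v "real \<Rightarrow> 'v qtree"

primrec qt_result :: "'v qtree \<Rightarrow> ('v \<Rightarrow> real) \<Rightarrow> 'v" where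
  "qt_result (Output a) f = a"
| "qt_result (Query v g) f = qt_result (g (f v)) f"

primrec qt_cost :: "'v qtree \<Rightarrow> ('v \<Rightarrow> real) \<Rightarrow> nat" where
  "qt_cost (Output a) f = 0"
| "qt_cost (Query v g) f = Suc (qt_cost (g (f v)) f)"

definition D_LS :: "'v set \<Rightarrow> ('v \<Rightarrow> 'v \<Rightarrow> bool) \<Rightarrow> nat" where
  "D_LS V E = (LEAST q. \<exists>T. (\<forall>f. is_local_max V E f (qt_result T f)) \<and> (\<forall>f. qt_cost T f \<le> q))"

end

theory Submission
  imports Defs
begin


definition rel :: "('v \<Rightarrow> 'v \<Rightarrow> bool) \<Rightarrow> 'v set \<Rightarrow> 'v \<Rightarrow> 'v \<Rightarrow> bool" where
  "rel E S x y \<longleftrightarrow> x \<in> S \<and> y \<in> S \<and> E x y"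

definition conn :: "('v \<Rightarrow> 'v \<Rightarrow> bool) \<Rightarrow> 'v set \<Rightarrow> 'v \<Rightarrow> 'v \<Rightarrow> bool" where
  "conn E S = (rel E S)\<^sup>*\<^sup>*"

definition gcomp :: "('v \<Rightarrow> 'v \<Rightarrow> bool) \<Rightarrow> 'v set \<Rightarrow> 'v \<Rightarrow> 'v set" where
  "gcomp E S c = {w \<in> S. conn E S c w}"

definition gdist :: "('v \<Rightarrow> 'v \<Rightarrow> bool) \<Rightarrow> 'v set \<Rightarrow> 'v \<Rightarrow> 'v \<Rightarrow> nat" where
  "gdist E S u w = (LEAST m. (rel E S ^^ m) u w)"

lemma conn_refl[simp]: "conn E S x x" by (simp add: conn_def)

lemma conn_mono: "S \<subseteq> S' \<Longrightarrow> conn E S x y \<Longrightarrow> conn E S' x y"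
  unfolding conn_def
  by (erule rtranclp_mono[THEN predicate2D, rotated]) (auto simp: rel_def)

lemma conn_step: "x \<in> S \<Longrightarrow> y \<in> S \<Longrightarrow> E x y \<Longrightarrow> conn E S y z \<Longrightarrow> conn E S x z"
  unfolding conn_def by (rule converse_rtranclp_into_rtranclp) (auto simp: rel_def)

lemma conn_trans: "conn E S x y \<Longrightarrow> conn E S y z \<Longrightarrow> conn E S x z"
  unfolding conn_def by auto

lemma conn_mem: "conn E S x y \<Longrightarrow> x \<noteq> y \<Longrightarrow> x \<in> S \<and> y \<in> S"
  unfolding conn_def
  by (induction rule: rtranclp_induct) (auto simp: rel_def)

lemma conn_sym:
  assumes sym: "\<And>x y. E x y \<Longrightarrow> E y x"
  shows "conn E S x y \<Longrightarrow> conn E S y x"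
  unfolding conn_def
proof (induction rule: rtranclp_induct)
  case base then show ?case by simp
next
  case (step y z)
  then have "rel E S z y" using sym by (auto simp: rel_def)
  with step show ?case by (meson converse_rtranclp_into_rtranclp)
qed

lemma gdist_step:
  assumes "conn E S u w" "u \<noteq> w"
  shows "\<exists>b. b \<in> S \<and> E u b \<and> conn E S b w \<and> gdist E S b w < gdist E S u w"
proof -
  from assms(1) obtain m where m: "(rel E S ^^ m) u w"
    unfolding conn_def using rtranclp_imp_relpowp by metis
  define d where "d = gdist E S u w"
  have d: "(rel E S ^^ d) u w" unfolding d_def gdist_def by (rule LeastI[of _ m]) (rule m)
  have "d \<noteq> 0" using d assms(2) by (metis relpowp.simps(1))
  then obtain d' where d': "d = Suc d'" by (cases d) auto
  then obtain b where b: "rel E S u b" "(rel E S ^^ d') b w"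
    using d relpowp_Suc_D2 by metis
  have "gdist E S b w \<le> d'" unfolding gdist_def by (rule Least_le) (rule b(2))
  moreover have "conn E S b w" unfolding conn_def using b(2) relpowp_imp_rtranclp by metis
  ultimately show ?thesis using b(1) d' unfolding d_def rel_def by auto
qed

lemma comp_sub: "gcomp E S c \<subseteq> S" by (auto simp: gcomp_def)

lemma comp_self: "c \<in> S \<Longrightarrow> c \<in> gcomp E S c" by (auto simp: gcomp_def)

lemma comp_closed: "x \<in> gcomp E S c \<Longrightarrow> y \<in> S \<Longrightarrow> E x y \<Longrightarrow> y \<in> gcomp E S c"
  unfolding gcomp_def using conn_trans[of E S c x y] conn_step[of x S y E y] by auto

lemma comp_conn:
  assumes sym: "\<And>x y. E x y \<Longrightarrow> E y x"
  assumes x: "x \<in> gcomp E S c" and y: "y \<in> gcomp E S c"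
  shows "conn E (gcomp E S c) x y"
proof -
  have cx: "conn E S x y" using x y conn_sym[of E S c x, OF sym] conn_trans[of E S x c y] unfolding gcomp_def by blast
  have "conn E S x y \<Longrightarrow> conn E (gcomp E S c) x y"
    unfolding conn_def
  proof (induction rule: rtranclp_induct)
    case base then show ?case by simp
  next
    case (step y z)
    have yc: "y \<in> gcomp E S c"
    proof (cases "x = y")
      case True then show ?thesis using x by simp
    next
      case False then show ?thesis using conn_mem[of E "gcomp E S c" x y] step(3) unfolding conn_def by auto
    qed
    have "z \<in> gcomp E S c" using comp_closed[OF yc] step(2) by (auto simp: rel_def)
    then have "rel E (gcomp E S c) y z" using yc step(2) by (auto simp: rel_def)
    then show ?case using step(3) by (meson rtranclp.rtrancl_into_rtrancl)
  qed
  then show ?thesis using cx by blast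
qed



record 'v ast = aR :: "'v set" aval :: "'v \<Rightarrow> real" atm :: nat aQ :: "'v set"

locale lsg =
  fixes V :: "'v set" and E :: "'v \<Rightarrow> 'v \<Rightarrow> bool"
  assumes finV: "finite V" and symE: "\<And>x y. E x y \<Longrightarrow> E y x"
    and nbr: "\<And>v. v \<in> V \<Longrightarrow> \<exists>w\<in>V. E v w \<and> w \<noteq> v"
    and Vne: "V \<noteq> {}"
    and Vconn: "\<And>x y. x \<in> V \<Longrightarrow> y \<in> V \<Longrightarrow> conn E V x y"
begin

definition pick :: "'v set \<Rightarrow> 'v set" where
  "pick S = (if S = {} then {} else
     gcomp E S (SOME c. c \<in> S \<and> (\<forall>c'\<in>S. card (gcomp E S c') \<le> card (gcomp E S c))))"

lemma pick_ex:
  assumes "S \<subseteq> V" "S \<noteq> {}"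
  shows "\<exists>c\<in>S. pick S = gcomp E S c \<and> (\<forall>c'\<in>S. card (gcomp E S c') \<le> card (pick S))"
proof -
  have fin: "finite S" using assms finV finite_subset by blast
  define F where "F = (\<lambda>c. card (gcomp E S c)) ` S"
  have fF: "finite F" "F \<noteq> {}" using fin assms(2) unfolding F_def by auto
  have "Max F \<in> F" using Max_in[OF fF] .
  then obtain c where c1: "c \<in> S" "card (gcomp E S c) = Max F" unfolding F_def by auto
  have c: "c \<in> S" "\<forall>c'\<in>S. card (gcomp E S c') \<le> card (gcomp E S c)"
    using c1 Max_ge[OF fF(1)] unfolding F_def by auto
  then have "\<exists>c. c \<in> S \<and> (\<forall>c'\<in>S. card (gcomp E S c') \<le> card (gcomp E S c))" by blast
  from someI_ex[OF this] show ?thesis unfolding pick_def using assms(2) by auto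
qed

lemma pick_sub: "pick S \<subseteq> S" by (simp add: pick_def comp_sub)

definition step :: "'v ast \<Rightarrow> 'v \<Rightarrow> 'v ast" where
  "step s v = (if v \<in> aR s then
      s\<lparr>aR := pick (aR s - {v}),
        aval := (\<lambda>u. if u \<in> aR s - pick (aR s - {v})
                     then real (atm s) + 1 / (real (gdist E (aR s - pick (aR s - {v})) u v) + 1)
                     else aval s u),
        atm := Suc (atm s), aQ := insert v (aQ s)\<rparr>
    else s\<lparr>atm := Suc (atm s), aQ := aQ s \<union> ({v} \<inter> V)\<rparr>)"

primrec run :: "'v qtree \<Rightarrow> 'v ast \<Rightarrow> 'v \<times> 'v ast" where
  "run (Output a) s = (a, s)"
| "run (Query v g) s = run (g (aval (step s v) v)) (step s v)"

definition inv :: "'v ast \<Rightarrow> bool" where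
  "inv s \<longleftrightarrow> aR s \<subseteq> V \<and> aQ s \<subseteq> V \<and> aR s \<inter> aQ s = {} \<and> card (aQ s) \<le> atm s
    \<and> (\<forall>x\<in>aR s. \<forall>y\<in>aR s. conn E (aR s) x y)
    \<and> (\<forall>x\<in>aR s. \<forall>y\<in>V. E x y \<longrightarrow> y \<in> aR s \<or> y \<in> aQ s)
    \<and> (\<forall>u\<in>V - aR s. 0 < aval s u \<and> aval s u \<le> real (atm s))
    \<and> (aR s \<noteq> {} \<longrightarrow> (\<forall>u\<in>V - aR s. \<exists>w\<in>V. E u w \<and> (w \<in> aR s \<or> aval s u < aval s w)))
    \<and> (2 * card (aR s) \<le> card V \<longrightarrow> (\<exists>Q'. Q' \<subseteq> V \<and> card Q' \<le> atm s \<and>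
          (\<forall>u\<in>V - Q'. 2 * card (gcomp E (V - Q') u) \<le> card V)))"

lemma step_R_sub: "aR (step s v) \<subseteq> aR s"
  unfolding step_def using pick_sub by auto

lemma step_val: "u \<notin> aR s \<Longrightarrow> aval (step s v) u = aval s u"
  unfolding step_def by auto

lemma step_v: "v \<notin> aR (step s v)"
  unfolding step_def using pick_sub by auto

lemma step_atm: "atm (step s v) = Suc (atm s)"
  unfolding step_def by auto

lemma conn_to_pick:
  assumes R: "v \<in> R" and c: "c \<in> gcomp E (R - {v}) c0" and cc: "conn E R x c"
  shows "(x = v \<longrightarrow> (\<exists>p\<in>gcomp E (R - {v}) c0. E v p)) \<and>
         (x \<in> R - {v} \<longrightarrow> x \<in> gcomp E (R - {v}) c0 \<or> (\<exists>p\<in>gcomp E (R - {v}) c0. E v p))"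
  using cc unfolding conn_def
proof (induction rule: converse_rtranclp_induct)
  case base
  have "c \<noteq> v" using c comp_sub by fastforce
  then show ?case using c by auto
next
  case (step x y)
  have xy: "x \<in> R" "y \<in> R" "E x y" using step(1) by (auto simp: rel_def)
  show ?case
  proof (cases "y = v")
    case True then show ?thesis using step(3) by auto
  next
    case False
    then have yR: "y \<in> R - {v}" using xy by auto
    show ?thesis
    proof (cases "y \<in> gcomp E (R - {v}) c0")
      case True
      have "x \<in> R - {v} \<Longrightarrow> x \<in> gcomp E (R - {v}) c0"
        using comp_closed[OF True, of x] symE[OF xy(3)] by auto
      then show ?thesis using True xy(3) by auto
    next
      case False
      then show ?thesis using step(3) yR by auto
    qed
  qed
qed

lemma conn_dead:
  assumes R: "v \<in> R" and R': "R' = gcomp E (R - {v}) c0" and cc: "conn E R a v"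
  shows "a \<in> R - R' \<longrightarrow> conn E (R - R') a v"
  using cc unfolding conn_def
proof (induction rule: converse_rtranclp_induct)
  case base then show ?case by simp
next
  case (step x y)
  have xy: "x \<in> R" "y \<in> R" "E x y" using step(1) by (auto simp: rel_def)
  have vR: "v \<in> R - R'" using R R' comp_sub by fastforce
  show ?case
  proof
    assume x: "x \<in> R - R'"
    show "(rel E (R - R'))\<^sup>*\<^sup>* x v"
    proof (cases "y = v")
      case True
      then have "rel E (R - R') x y" using x vR xy by (auto simp: rel_def)
      then show ?thesis using True by auto
    next
      case yv: False
      show ?thesis
      proof (cases "x = v")
        case True then show ?thesis by simp
      next
        case False
        have "y \<notin> R'"
        proof
          assume "y \<in> R'"
          then have "x \<in> R'" using comp_closed[of y E "R - {v}" c0 x] symE[OF xy(3)] R' x False by auto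
          then show False using x by blast
        qed
        then have "y \<in> R - R'" using xy by auto
        then have "(rel E (R - R'))\<^sup>*\<^sup>* y v" using step(3) by blast
        moreover have "rel E (R - R') x y" using x \<open>y \<in> R - R'\<close> xy by (auto simp: rel_def)
        ultimately show ?thesis by (meson converse_rtranclp_into_rtranclp)
      qed
    qed
  qed
qed

lemma invD:
  assumes "inv s"
  shows "aR s \<subseteq> V" "aQ s \<subseteq> V" "aR s \<inter> aQ s = {}" "card (aQ s) \<le> atm s"
    "\<forall>x\<in>aR s. \<forall>y\<in>aR s. conn E (aR s) x y"
    "\<forall>x\<in>aR s. \<forall>y\<in>V. E x y \<longrightarrow> y \<in> aR s \<or> y \<in> aQ s"
    "\<forall>u\<in>V - aR s. 0 < aval s u \<and> aval s u \<le> real (atm s)"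
    "aR s \<noteq> {} \<longrightarrow> (\<forall>u\<in>V - aR s. \<exists>w\<in>V. E u w \<and> (w \<in> aR s \<or> aval s u < aval s w))"
    "2 * card (aR s) \<le> card V \<longrightarrow> (\<exists>Q'. Q' \<subseteq> V \<and> card Q' \<le> atm s \<and>
          (\<forall>u\<in>V - Q'. 2 * card (gcomp E (V - Q') u) \<le> card V))"
  using assms unfolding inv_def by simp_all

lemma invI:
  assumes "aR s \<subseteq> V" "aQ s \<subseteq> V" "aR s \<inter> aQ s = {}" "card (aQ s) \<le> atm s"
    "\<forall>x\<in>aR s. \<forall>y\<in>aR s. conn E (aR s) x y"
    "\<forall>x\<in>aR s. \<forall>y\<in>V. E x y \<longrightarrow> y \<in> aR s \<or> y \<in> aQ s"
    "\<forall>u\<in>V - aR s. 0 < aval s u \<and> aval s u \<le> real (atm s)"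
    "aR s \<noteq> {} \<longrightarrow> (\<forall>u\<in>V - aR s. \<exists>w\<in>V. E u w \<and> (w \<in> aR s \<or> aval s u < aval s w))"
    "2 * card (aR s) \<le> card V \<longrightarrow> (\<exists>Q'. Q' \<subseteq> V \<and> card Q' \<le> atm s \<and>
          (\<forall>u\<in>V - Q'. 2 * card (gcomp E (V - Q') u) \<le> card V))"
  shows "inv s"
  unfolding inv_def by (intro conjI) (fact assms)+

lemma inv_step:
  assumes I: "inv s"
  shows "inv (step s v)"
proof (cases "v \<in> aR s")
  case False
  define s' where "s' = step s v"
  then have st: "aR s' = aR s" "aval s' = aval s" "atm s' = Suc (atm s)" "aQ s' = aQ s \<union> ({v} \<inter> V)"
    unfolding step_def using False by simp_all
  note D = invD[OF I]
  have fQ: "finite (aQ s)" using D(2) finV finite_subset by blast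
  have cq: "card (aQ s \<union> ({v} \<inter> V)) \<le> Suc (card (aQ s))"
  proof (cases "v \<in> V")
    case True then show ?thesis by (simp add: card_insert_if fQ)
  next
    case False then show ?thesis by simp
  qed
  have "inv s'"
  proof (rule invI)
    show "aR s' \<subseteq> V" using D(1) st by simp
    show "aQ s' \<subseteq> V" using D(2) st by auto
    show "aR s' \<inter> aQ s' = {}" using D(3) st False by auto
    show "card (aQ s') \<le> atm s'" using D(4) st cq by simp
    show "\<forall>x\<in>aR s'. \<forall>y\<in>aR s'. conn E (aR s') x y" using D(5) st by simp
    show "\<forall>x\<in>aR s'. \<forall>y\<in>V. E x y \<longrightarrow> y \<in> aR s' \<or> y \<in> aQ s'"
    proof (intro ballI impI)
      fix x y assume "x \<in> aR s'" "y \<in> V" "E x y"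
      then have "y \<in> aR s \<or> y \<in> aQ s" using D(6) st(1) by auto
      then show "y \<in> aR s' \<or> y \<in> aQ s'" using st by auto
    qed
    show "\<forall>u\<in>V - aR s'. 0 < aval s' u \<and> aval s' u \<le> real (atm s')"
    proof
      fix u assume "u \<in> V - aR s'"
      then have "0 < aval s u \<and> aval s u \<le> real (atm s)" using D(7) st by auto
      then show "0 < aval s' u \<and> aval s' u \<le> real (atm s')" using st by simp
    qed
    show "aR s' \<noteq> {} \<longrightarrow> (\<forall>u\<in>V - aR s'. \<exists>w\<in>V. E u w \<and> (w \<in> aR s' \<or> aval s' u < aval s' w))"
      using D(8) st by simp
    show "2 * card (aR s') \<le> card V \<longrightarrow> (\<exists>Q'. Q' \<subseteq> V \<and> card Q' \<le> atm s' \<and>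
          (\<forall>u\<in>V - Q'. 2 * card (gcomp E (V - Q') u) \<le> card V))"
    proof
      assume "2 * card (aR s') \<le> card V"
      then obtain Q' where "Q' \<subseteq> V" "card Q' \<le> atm s" "\<forall>u\<in>V - Q'. 2 * card (gcomp E (V - Q') u) \<le> card V"
        using D(9) st by auto
      then show "\<exists>Q'. Q' \<subseteq> V \<and> card Q' \<le> atm s' \<and> (\<forall>u\<in>V - Q'. 2 * card (gcomp E (V - Q') u) \<le> card V)"
        using st by (intro exI[of _ Q']) simp
    qed
  qed
  then show ?thesis unfolding s'_def .
next
  case vR: True
  define R where "R = aR s"
  define R' where "R' = pick (R - {v})"
  define D where "D = R - R'"
  define t where "t = atm s"
  define val' where "val' = (\<lambda>u. if u \<in> D then real t + 1 / (real (gdist E D u v) + 1) else aval s u)"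
  have st: "step s v = s\<lparr>aR := R', aval := val', atm := Suc t, aQ := insert v (aQ s)\<rparr>"
    unfolding step_def R_def R'_def D_def t_def val'_def using vR by simp
  have RV: "R \<subseteq> V" and QV: "aQ s \<subseteq> V" and RQ: "R \<inter> aQ s = {}" and cQ: "card (aQ s) \<le> t"
   and Rc: "\<forall>x\<in>R. \<forall>y\<in>R. conn E R x y"
   and Rcl: "\<forall>x\<in>R. \<forall>y\<in>V. E x y \<longrightarrow> y \<in> R \<or> y \<in> aQ s"
   and Dv: "\<forall>u\<in>V - R. 0 < aval s u \<and> aval s u \<le> real t"
   and Pr: "R \<noteq> {} \<longrightarrow> (\<forall>u\<in>V - R. \<exists>w\<in>V. E u w \<and> (w \<in> R \<or> aval s u < aval s w))"
   and Hf: "2 * card R \<le> card V \<longrightarrow> (\<exists>Q'. Q' \<subseteq> V \<and> card Q' \<le> t \<and>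
          (\<forall>u\<in>V - Q'. 2 * card (gcomp E (V - Q') u) \<le> card V))"
    using invD[OF I] unfolding R_def t_def by simp_all
  have vR': "v \<in> R" using vR R_def by simp
  have R'sub: "R' \<subseteq> R - {v}" unfolding R'_def using pick_sub .
  have fQ: "finite (aQ s)" using QV finV finite_subset by blast
  have fR: "finite R" using RV finV finite_subset by blast
  have R'comp: "R' = {} \<or> (\<exists>c0\<in>R - {v}. R' = gcomp E (R - {v}) c0 \<and>
                 (\<forall>c'\<in>R - {v}. card (gcomp E (R - {v}) c') \<le> card R'))"
  proof (cases "R - {v} = {}")
    case True then show ?thesis unfolding R'_def pick_def by simp
  next
    case False
    then show ?thesis using pick_ex[of "R - {v}"] RV unfolding R'_def by auto
  qed
  have R'cl: "y \<in> R'" if x: "x \<in> R'" and y: "y \<in> R - {v}" and e: "E x y" for x y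
  proof -
    have "R' \<noteq> {}" using x by blast
    then obtain c0 where "R' = gcomp E (R - {v}) c0" using R'comp by blast
    then show ?thesis using comp_closed[of x E "R - {v}" c0 y] x y e by simp
  qed
  have vD: "v \<in> D" unfolding D_def using vR' R'sub by auto
  have DR: "D \<subseteq> R" unfolding D_def by auto
  have val_old: "\<And>u. u \<notin> D \<Longrightarrow> val' u = aval s u" unfolding val'_def by simp
  have val_new: "\<And>u. u \<in> D \<Longrightarrow> real t < val' u \<and> val' u \<le> real t + 1"
    unfolding val'_def by (auto simp: field_simps)
  have J1: "R' \<subseteq> V \<and> insert v (aQ s) \<subseteq> V \<and> R' \<inter> insert v (aQ s) = {} \<and> card (insert v (aQ s)) \<le> Suc t"
    using R'sub RV QV RQ vR' cQ by (auto simp: card_insert_if fQ)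
  have J2: "\<forall>x\<in>R'. \<forall>y\<in>R'. conn E R' x y"
  proof (intro ballI)
    fix x y assume x: "x \<in> R'" and y: "y \<in> R'"
    then obtain c0 where "R' = gcomp E (R - {v}) c0" using R'comp by blast
    then show "conn E R' x y" using comp_conn[of E x "R - {v}" c0 y, OF symE] x y by simp
  qed
  have J3: "\<forall>x\<in>R'. \<forall>y\<in>V. E x y \<longrightarrow> y \<in> R' \<or> y \<in> insert v (aQ s)"
  proof (intro ballI impI)
    fix x y assume x: "x \<in> R'" and y: "y \<in> V" and e: "E x y"
    have "y \<in> R \<or> y \<in> aQ s" using Rcl x y e R'sub by blast
    then show "y \<in> R' \<or> y \<in> insert v (aQ s)" using R'cl[OF x _ e] by blast
  qed
  have J4: "\<forall>u\<in>V - R'. 0 < val' u \<and> val' u \<le> real (Suc t)"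
  proof
    fix u assume u: "u \<in> V - R'"
    show "0 < val' u \<and> val' u \<le> real (Suc t)"
    proof (cases "u \<in> D")
      case True then show ?thesis using val_new[of u] by auto
    next
      case False
      then have "u \<in> V - R" using u unfolding D_def by auto
      then have "0 < aval s u \<and> aval s u \<le> real t" using Dv by blast
      then show ?thesis using val_old[OF False] by auto
    qed
  qed
  have J5: "R' \<noteq> {} \<longrightarrow> (\<forall>u\<in>V - R'. \<exists>w\<in>V. E u w \<and> (w \<in> R' \<or> val' u < val' w))"
  proof (intro impI ballI)
    assume ne: "R' \<noteq> {}"
    then obtain c0 where c0: "c0 \<in> R - {v}" "R' = gcomp E (R - {v}) c0" using R'comp by blast
    fix u assume u: "u \<in> V - R'"
    show "\<exists>w\<in>V. E u w \<and> (w \<in> R' \<or> val' u < val' w)"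
    proof (cases "u \<in> D")
      case uD: True
      show ?thesis
      proof (cases "u = v")
        case True
        obtain c where c: "c \<in> R'" using ne by blast
        have "conn E R v c" using Rc vR' c R'sub by blast
        from conn_to_pick[OF vR' _ this] c c0(2)
        obtain p where "p \<in> R'" "E v p" by auto
        then show ?thesis using True R'sub RV by blast
      next
        case False
        have "conn E R u v" using Rc uD DR vR' by blast
        then have "conn E D u v" using conn_dead[OF vR' c0(2)] uD unfolding D_def by blast
        from gdist_step[OF this False] obtain b where b: "b \<in> D" "E u b" "gdist E D b v < gdist E D u v"
          by blast
        have "val' u < val' b" using b uD unfolding val'_def by (auto simp: field_simps)
        then show ?thesis using b DR RV by blast
      qed
    next
      case uD: False
      then have uR: "u \<in> V - R" using u unfolding D_def by auto
      then obtain w where w: "w \<in> V" "E u w" "w \<in> R \<or> aval s u < aval s w"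
        using Pr vR' by blast
      have vu: "val' u = aval s u" using val_old[OF uD] .
      show ?thesis
      proof (cases "w \<in> R")
        case True
        show ?thesis
        proof (cases "w \<in> R'")
          case True then show ?thesis using w by blast
        next
          case False
          then have "w \<in> D" using \<open>w \<in> R\<close> unfolding D_def by auto
          then have "real t < val' w" using val_new by blast
          moreover have "aval s u \<le> real t" using Dv uR by blast
          ultimately show ?thesis using w vu by auto
        qed
      next
        case False
        then have "w \<notin> D" using DR by blast
        then show ?thesis using w False vu val_old by auto
      qed
    qed
  qed
  have J6: "2 * card R' \<le> card V \<longrightarrow> (\<exists>Q'. Q' \<subseteq> V \<and> card Q' \<le> Suc t \<and>
          (\<forall>u\<in>V - Q'. 2 * card (gcomp E (V - Q') u) \<le> card V))"
  proof
    assume h: "2 * card R' \<le> card V"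
    show "\<exists>Q'. Q' \<subseteq> V \<and> card Q' \<le> Suc t \<and> (\<forall>u\<in>V - Q'. 2 * card (gcomp E (V - Q') u) \<le> card V)"
    proof (cases "2 * card R \<le> card V")
      case True
      then obtain Q' where "Q' \<subseteq> V" "card Q' \<le> t" "\<forall>u\<in>V - Q'. 2 * card (gcomp E (V - Q') u) \<le> card V"
        using Hf by blast
      then show ?thesis by (intro exI[of _ Q']) auto
    next
      case big: False
      define Q' where "Q' = insert v (aQ s)"
      have "\<forall>u\<in>V - Q'. 2 * card (gcomp E (V - Q') u) \<le> card V"
      proof
        fix u assume u: "u \<in> V - Q'"
        show "2 * card (gcomp E (V - Q') u) \<le> card V"
        proof (cases "u \<in> R")
          case True
          then have uR: "u \<in> R - {v}" using u Q'_def by auto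
          have stay: "conn E (V - Q') u y \<Longrightarrow> conn E (R - {v}) u y \<and> y \<in> R - {v}" for y
            unfolding conn_def
          proof (induction rule: rtranclp_induct)
            case base then show ?case using uR by simp
          next
            case (step y z)
            have yz: "y \<in> V - Q'" "z \<in> V - Q'" "E y z" using step(2) by (auto simp: rel_def)
            have yR: "y \<in> R" using step(3) by simp
            have zV: "z \<in> V" using yz by simp
            have "z \<in> R \<or> z \<in> aQ s" using Rcl[rule_format, OF yR zV yz(3)] .
            then have zR: "z \<in> R - {v}" using yz Q'_def by auto
            then have "rel E (R - {v}) y z" using step(3) yz by (auto simp: rel_def)
            then show ?case using step(3) zR
              by (metis conn_def rtranclp.rtrancl_into_rtrancl)
          qed
          have sub: "gcomp E (V - Q') u \<subseteq> gcomp E (R - {v}) u"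
            using stay unfolding gcomp_def by blast
          have s1: "R - {v} \<subseteq> V" using RV by blast
          have s2: "R - {v} \<noteq> {}" using uR by blast
          obtain c0 where c0: "c0 \<in> R - {v}" "R' = gcomp E (R - {v}) c0"
              "\<forall>c'\<in>R - {v}. card (gcomp E (R - {v}) c') \<le> card R'"
            using pick_ex[OF s1 s2] unfolding R'_def[symmetric] by blast
          have "card (gcomp E (V - Q') u) \<le> card (gcomp E (R - {v}) u)"
          proof (rule card_mono[OF _ sub])
            show "finite (gcomp E (R - {v}) u)"
              using finite_subset[OF comp_sub[of E "R - {v}" u]] fR by simp
          qed
          also have "\<dots> \<le> card R'" using c0(3) uR by blast
          finally show ?thesis using h by linarith
        next
          case False
          have stay: "conn E (V - Q') u y \<Longrightarrow> y \<notin> R" for y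
            unfolding conn_def
          proof (induction rule: rtranclp_induct)
            case base then show ?case using False by simp
          next
            case (step y z)
            have yz: "y \<in> V - Q'" "z \<in> V - Q'" "E y z" using step(2) by (auto simp: rel_def)
            show ?case
            proof
              assume "z \<in> R"
              moreover have "y \<in> V" using yz by simp
              ultimately have "y \<in> R \<or> y \<in> aQ s" using Rcl[rule_format, of z y] symE[OF yz(3)] by blast
              then show False using step(3) yz Q'_def by auto
            qed
          qed
          have sub: "gcomp E (V - Q') u \<subseteq> V - R"
            using stay unfolding gcomp_def by blast
          have "card (gcomp E (V - Q') u) \<le> card (V - R)"
            using sub finV by (simp add: card_mono)
          also have "\<dots> = card V - card R" using RV finV by (simp add: card_Diff_subset fR)
          finally show ?thesis using big by linarith
        qed
      qed
      moreover have "Q' \<subseteq> V \<and> card Q' \<le> Suc t" using J1 Q'_def by simp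
      ultimately show ?thesis by blast
    qed
  qed
  show ?thesis by (rule invI) (use J1 J2 J3 J4 J5 J6 in \<open>simp_all add: st\<close>)
qed

lemma run_inv: "inv s \<Longrightarrow> inv (snd (run T s))"
  by (induction T arbitrary: s) (auto simp: inv_step)

lemma run_mono: "aR (snd (run T s)) \<subseteq> aR s \<and> (\<forall>u. u \<notin> aR s \<longrightarrow> aval (snd (run T s)) u = aval s u)"
proof (induction T arbitrary: s)
  case (Output x) then show ?case by simp
next
  case (Query v g)
  let ?s1 = "step s v"
  have "aR (snd (run (g (aval ?s1 v)) ?s1)) \<subseteq> aR ?s1 \<and>
        (\<forall>u. u \<notin> aR ?s1 \<longrightarrow> aval (snd (run (g (aval ?s1 v)) ?s1)) u = aval ?s1 u)"
    using Query by blast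
  then show ?case using step_R_sub[of s v] step_val[of _ s v] by auto
qed

lemma run_sim:
  assumes "\<forall>u. u \<notin> aR (snd (run T s)) \<longrightarrow> f u = aval (snd (run T s)) u"
  shows "qt_result T f = fst (run T s) \<and> qt_cost T f + atm s = atm (snd (run T s))"
  using assms
proof (induction T arbitrary: s)
  case (Output x) then show ?case by simp
next
  case (Query v g)
  let ?s1 = "step s v"
  let ?x = "aval ?s1 v"
  have eq: "run (Query v g) s = run (g ?x) ?s1" by simp
  have IH: "qt_result (g ?x) f = fst (run (g ?x) ?s1) \<and> qt_cost (g ?x) f + atm ?s1 = atm (snd (run (g ?x) ?s1))"
  proof (rule Query.IH)
    show "g ?x \<in> range g" by simp
    show "\<forall>u. u \<notin> aR (snd (run (g ?x) ?s1)) \<longrightarrow> f u = aval (snd (run (g ?x) ?s1)) u"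
      using Query.prems eq by simp
  qed
  have vnot: "v \<notin> aR ?s1" by (rule step_v)
  have "v \<notin> aR (snd (run (g ?x) ?s1))" using run_mono[of "g ?x" ?s1] vnot by blast
  then have "f v = aval (snd (run (g ?x) ?s1)) v" using Query.prems eq by metis
  also have "\<dots> = ?x" using run_mono[of "g ?x" ?s1] vnot by blast
  finally have fv: "f v = ?x" .
  show ?case using IH fv eq step_atm[of s v] by simp
qed

definition s0 :: "'v ast" where "s0 = \<lparr>aR = V, aval = (\<lambda>_. 0), atm = 0, aQ = {}\<rparr>"

lemma inv_s0: "inv s0"
proof (rule invI)
  have "card V > 0" using finV Vne by (simp add: card_gt_0_iff)
  then show "2 * card (aR s0) \<le> card V \<longrightarrow> (\<exists>Q'. Q' \<subseteq> V \<and> card Q' \<le> atm s0 \<and>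
          (\<forall>u\<in>V - Q'. 2 * card (gcomp E (V - Q') u) \<le> card V))" by (simp add: s0_def)
qed (auto simp: s0_def Vconn)

theorem adversary:
  assumes correct: "\<forall>f. is_local_max V E f (qt_result T f)"
  shows "\<exists>Q f. Q \<subseteq> V \<and> card Q \<le> qt_cost T f \<and> (\<forall>u\<in>V - Q. 2 * card (gcomp E (V - Q) u) \<le> card V)"
proof -
  obtain a sF where rn: "run T s0 = (a, sF)" by fastforce
  have I: "inv sF" using run_inv[OF inv_s0, of T] rn by simp
  note D = invD[OF I]
  define R where "R = aR sF"
  define t where "t = atm sF"
  show ?thesis
  proof (cases "R = {}")
    case True
    then obtain Q' where Q': "Q' \<subseteq> V" "card Q' \<le> t" "\<forall>u\<in>V - Q'. 2 * card (gcomp E (V - Q') u) \<le> card V"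
      using D(9) unfolding R_def t_def by auto
    define f where "f = aval sF"
    have "qt_cost T f + atm s0 = atm sF" using run_sim[of T s0 f] rn unfolding f_def by simp
    then have "qt_cost T f = t" unfolding t_def s0_def by simp
    then show ?thesis using Q' by metis
  next
    case Rne: False
    define r where "r = (if R = {a} then a else (SOME r. r \<in> R \<and> r \<noteq> a))"
    define f where "f = (\<lambda>u. if u \<in> R then (if R = {a} then 0 else real t + 1 + 1 / (real (gdist E R u r) + 1))
                              else aval sF u)"
    have "qt_result T f = fst (run T s0)" using run_sim[of T s0 f] rn unfolding f_def R_def by simp
    then have res: "qt_result T f = a" using rn by simp
    have "\<not> is_local_max V E f a"
    proof
      assume lm: "is_local_max V E f a"
      then have aV: "a \<in> V" and le: "\<And>b. b \<in> V \<Longrightarrow> E a b \<Longrightarrow> f b \<le> f a"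
        unfolding is_local_max_def by auto
      show False
      proof (cases "a \<in> R")
        case False
        then obtain w where w: "w \<in> V" "E a w" "w \<in> R \<or> aval sF a < aval sF w"
          using D(8) Rne aV unfolding R_def by blast
        have fa: "f a = aval sF a" using False unfolding f_def by simp
        have "aval sF a \<le> real t" using D(7) aV False unfolding R_def t_def by blast
        moreover have "R \<noteq> {a}" using False by blast
        ultimately have "f a < f w"
        proof (cases "w \<in> R")
          case True
          have "0 < 1 / (real (gdist E R w r) + 1)" by simp
          then have "aval sF a < real t + 1 + 1 / (real (gdist E R w r) + 1)"
            using \<open>aval sF a \<le> real t\<close> by linarith
          then show ?thesis using True \<open>R \<noteq> {a}\<close> fa unfolding f_def by simp
        next
          case False
          then show ?thesis using w fa unfolding f_def by simp
        qed
        then show False using le[OF w(1) w(2)] by simp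
      next
        case aR: True
        show False
        proof (cases "R = {a}")
          case True
          obtain w where w: "w \<in> V" "E a w" "w \<noteq> a" using nbr[OF aV] by blast
          have "w \<notin> R" using True w by simp
          then have "f w = aval sF w" unfolding f_def by simp
          moreover have "0 < aval sF w" using D(7) w(1) \<open>w \<notin> R\<close> unfolding R_def by blast
          moreover have "f a = 0" using True unfolding f_def by simp
          ultimately show False using le[OF w(1) w(2)] by simp
        next
          case False
          have "\<exists>r. r \<in> R \<and> r \<noteq> a" using False aR by blast
          from someI_ex[OF this] have "(SOME r. r \<in> R \<and> r \<noteq> a) \<in> R \<and> (SOME r. r \<in> R \<and> r \<noteq> a) \<noteq> a" .
          then have r: "r \<in> R" "r \<noteq> a" unfolding r_def using False by simp_all
          have "conn E R a r" using D(5) aR r unfolding R_def by blast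
          from gdist_step[OF this r(2)[symmetric]] obtain b where
            b: "b \<in> R" "E a b" "gdist E R b r < gdist E R a r" by blast
          have "f a < f b" using b aR False unfolding f_def by (auto simp: field_simps)
          moreover have "b \<in> V" using b(1) D(1) unfolding R_def by blast
          ultimately show False using le[OF _ b(2)] by fastforce
        qed
      qed
    qed
    then show ?thesis using correct res by metis
  qed
qed

end


definition best :: "('v \<times> real) list \<Rightarrow> 'v" where
  "best acc = fst (SOME p. p \<in> set acc \<and> (\<forall>q\<in>set acc. snd q \<le> snd p))"

primrec build :: "'v list \<Rightarrow> ('v \<times> real) list \<Rightarrow> 'v qtree" where
  "build [] acc = Output (best acc)"
| "build (v # vs) acc = Query v (\<lambda>x. build vs (acc @ [(v, x)]))"

lemma build_run: "qt_result (build vs acc) f = best (acc @ map (\<lambda>v. (v, f v)) vs) \<and>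
   qt_cost (build vs acc) f = length vs"
  by (induction vs arbitrary: acc) auto

lemma best_prop:
  assumes "L \<noteq> []"
  shows "\<exists>p. p \<in> set L \<and> (\<forall>q\<in>set L. snd q \<le> snd p) \<and> best L = fst p"
proof -
  have fin: "finite (snd ` set L)" "snd ` set L \<noteq> {}" using assms by auto
  obtain p where p: "p \<in> set L" "snd p = Max (snd ` set L)" using Max_in[OF fin] by auto
  have "\<forall>q\<in>set L. snd q \<le> snd p" using Max_ge[OF fin(1)] p(2) by simp
  then have "\<exists>p. p \<in> set L \<and> (\<forall>q\<in>set L. snd q \<le> snd p)" using p(1) by blast
  from someI_ex[OF this] show ?thesis unfolding best_def by blast
qed

lemma D_LS_exists:
  assumes "finite V" "V \<noteq> {}"
  shows "\<exists>q T. (\<forall>f. is_local_max V E f (qt_result T f)) \<and> (\<forall>f. qt_cost T f \<le> q)"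
proof -
  obtain xs where xs: "set xs = V" using finite_list[OF assms(1)] by blast
  define T where "T = build xs []"
  have "is_local_max V E f (qt_result T f)" for f
  proof -
    let ?L = "map (\<lambda>v. (v, f v)) xs"
    have "?L \<noteq> []" using xs assms(2) by auto
    then obtain p where p: "p \<in> set ?L" "\<forall>q\<in>set ?L. snd q \<le> snd p" "best ?L = fst p"
      using best_prop by blast
    have "qt_result T f = best ?L" using build_run[of xs "[]" f] unfolding T_def by simp
    then show ?thesis using p xs unfolding is_local_max_def by auto
  qed
  moreover have "qt_cost T f \<le> length xs" for f using build_run[of xs "[]" f] unfolding T_def by simp
  ultimately show ?thesis by blast
qed

lemma (in lsg) D_LS_ge:
  assumes b: "\<And>Q. Q \<subseteq> V \<Longrightarrow> (\<forall>u\<in>V - Q. 2 * card (gcomp E (V - Q) u) \<le> card V) \<Longrightarrow> b \<le> card Q"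
  shows "b \<le> D_LS V E"
proof -
  let ?P = "\<lambda>q. \<exists>T. (\<forall>f. is_local_max V E f (qt_result T f)) \<and> (\<forall>f. qt_cost T f \<le> q)"
  have "\<exists>q. ?P q" using D_LS_exists[OF finV Vne] by blast
  from LeastI_ex[OF this] obtain T where T: "\<forall>f. is_local_max V E f (qt_result T f)"
      "\<forall>f. qt_cost T f \<le> D_LS V E"
    unfolding D_LS_def by blast
  from adversary[OF T(1)] obtain Q f where Q: "Q \<subseteq> V" "card Q \<le> qt_cost T f"
      "\<forall>u\<in>V - Q. 2 * card (gcomp E (V - Q) u) \<le> card V" by blast
  have "b \<le> card Q" using b Q by blast
  also have "\<dots> \<le> D_LS V E" using Q(2) T(2) by (meson le_trans)
  finally show ?thesis .
qed

lemma (in lsg) D_LS_Q: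
  shows "\<exists>Q. Q \<subseteq> V \<and> (\<forall>u\<in>V - Q. 2 * card (gcomp E (V - Q) u) \<le> card V) \<and> card Q \<le> D_LS V E"
proof -
  let ?P = "\<lambda>q. \<exists>T. (\<forall>f. is_local_max V E f (qt_result T f)) \<and> (\<forall>f. qt_cost T f \<le> q)"
  have "\<exists>q. ?P q" using D_LS_exists[OF finV Vne] by blast
  from LeastI_ex[OF this] obtain T where T: "\<forall>f. is_local_max V E f (qt_result T f)"
      "\<forall>f. qt_cost T f \<le> D_LS V E"
    unfolding D_LS_def by blast
  from adversary[OF T(1)] obtain Q f where Q: "Q \<subseteq> V" "card Q \<le> qt_cost T f"
      "\<forall>u\<in>V - Q. 2 * card (gcomp E (V - Q) u) \<le> card V" by blast
  have "card Q \<le> D_LS V E" using Q(2) T(2) by (meson le_trans)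
  then show ?thesis using Q by blast
qed



locale oddg =
  fixes k :: nat
  assumes k1: "1 \<le> k"
begin

abbreviation "U \<equiv> {..<2*k+1}"
abbreviation "VV \<equiv> kneser_vertices (2*k+1) k"

definition tup :: "nat \<Rightarrow> (nat set \<times> nat list \<times> nat list) set" where
  "tup r = {(A, as, bs). A \<in> VV \<and> length as = r \<and> distinct as \<and> set as \<subseteq> A
            \<and> length bs = r \<and> distinct bs \<and> set bs \<subseteq> U - A}"

definition X :: "nat set \<Rightarrow> nat list \<Rightarrow> nat list \<Rightarrow> nat \<Rightarrow> nat set" where
  "X A as bs j = (A - set (take j as)) \<union> set (take j bs)"

definition pth :: "nat set \<Rightarrow> nat list \<Rightarrow> nat list \<Rightarrow> nat \<Rightarrow> nat set" where
  "pth A as bs i = (if even i then X A as bs (i div 2) else U - (X A as bs (i div 2) \<union> {bs ! (i div 2)}))"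

lemma tupD:
  assumes "(A, as, bs) \<in> tup r"
  shows "A \<subseteq> U" "card A = k" "length as = r" "distinct as" "set as \<subseteq> A"
    "length bs = r" "distinct bs" "set bs \<subseteq> U - A"
  using assms unfolding tup_def kneser_vertices_def by auto

lemma X_sub: "(A, as, bs) \<in> tup r \<Longrightarrow> X A as bs j \<subseteq> U"
  using tupD[of A as bs r] set_take_subset[of j as] set_take_subset[of j bs] unfolding X_def by blast

lemma card_X:
  assumes t: "(A, as, bs) \<in> tup r" and j: "j \<le> r"
  shows "card (X A as bs j) = k"
proof -
  note T = tupD[OF t]
  have fA: "finite A" using finite_subset[OF T(1)] by simp
  have d1: "distinct (take j as)" using T(4) by simp
  have c1: "card (set (take j as)) = j" using distinct_card[OF d1] T(3) j by simp
  have d2: "distinct (take j bs)" using T(7) by simp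
  have c2: "card (set (take j bs)) = j" using distinct_card[OF d2] T(6) j by simp
  have s1: "set (take j as) \<subseteq> A" using set_take_subset[of j as] T(5) by (rule order_trans)
  have s2: "set (take j bs) \<inter> A = {}" using set_take_subset[of j bs] T(8) by auto
  have cA: "card (A - set (take j as)) = k - j"
    using card_Diff_subset[OF finite_subset[OF s1 fA] s1] c1 T(2) by simp
  have jk: "j \<le> k" using card_mono[OF fA s1] c1 T(2) by simp
  have "card (X A as bs j) = card (A - set (take j as)) + card (set (take j bs))"
    unfolding X_def by (rule card_Un_disjoint) (use fA s2 in auto)
  then show ?thesis using cA c2 jk by simp
qed

lemma X_in_V: "(A, as, bs) \<in> tup r \<Longrightarrow> j \<le> r \<Longrightarrow> X A as bs j \<in> VV"
  using card_X X_sub unfolding kneser_vertices_def by blast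

lemma bsj_notin:
  assumes t: "(A, as, bs) \<in> tup r" and j: "j < r"
  shows "bs ! j \<notin> X A as bs j" "bs ! j \<in> U"
proof -
  note T = tupD[OF t]
  have "bs ! j \<in> set bs" using j T(6) by simp
  then have nA: "bs ! j \<notin> A" "bs ! j \<in> U" using T(8) by auto
  have "bs ! j \<notin> set (take j bs)"
  proof
    assume "bs ! j \<in> set (take j bs)"
    then obtain i where i: "i < j" "take j bs ! i = bs ! j" using j T(6)
      by (auto simp: in_set_conv_nth)
    then have "bs ! i = bs ! j" using j by simp
    then show False using nth_eq_iff_index_eq[OF T(7)] i j T(6) by simp
  qed
  then show "bs ! j \<notin> X A as bs j" using nA unfolding X_def by blast
  show "bs ! j \<in> U" by (rule nA(2))
qed

lemma M_in_V:
  assumes t: "(A, as, bs) \<in> tup r" and j: "j < r"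
  shows "U - (X A as bs j \<union> {bs ! j}) \<in> VV"
proof -
  have fX: "finite (X A as bs j)" using finite_subset[OF X_sub[OF t]] by simp
  have "card (insert (bs ! j) (X A as bs j)) = Suc k"
    using card_insert_disjoint[OF fX bsj_notin(1)[OF t j]] card_X[OF t] j by simp
  moreover have "insert (bs ! j) (X A as bs j) \<subseteq> U" using X_sub[OF t] bsj_notin(2)[OF t j] by simp
  ultimately have "card (U - insert (bs ! j) (X A as bs j)) = k"
    using card_Diff_subset[of "insert (bs ! j) (X A as bs j)" U] fX by simp
  moreover have "U - insert (bs ! j) (X A as bs j) \<subseteq> {..<2*k+1}" by auto
  ultimately show ?thesis unfolding kneser_vertices_def by simp
qed

lemma pth_in_V:
  assumes t: "(A, as, bs) \<in> tup r" and i: "i \<le> 2 * r"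
  shows "pth A as bs i \<in> VV"
proof (cases "even i")
  case True then show ?thesis unfolding pth_def using X_in_V[OF t] i by auto
next
  case False
  then have "i div 2 < r" using i by presburger
  then show ?thesis unfolding pth_def using M_in_V[OF t] False by auto
qed

lemma pth_adj:
  assumes t: "(A, as, bs) \<in> tup r" and i: "i < 2 * r"
  shows "kneser_adj (pth A as bs i) (pth A as bs (Suc i))"
proof (cases "even i")
  case True
  then show ?thesis unfolding pth_def kneser_adj_def by auto
next
  case False
  define j where "j = i div 2"
  have j: "j < r" "Suc i div 2 = Suc j" "even (Suc i)" using False i unfolding j_def by presburger+
  note T = tupD[OF t]
  have "X A as bs (Suc j) \<subseteq> X A as bs j \<union> {bs ! j}"
  proof -
    have "take (Suc j) bs = take j bs @ [bs ! j]" using take_Suc_conv_app_nth[of j bs] j(1) T(6) by simp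
    moreover have "set (take j as) \<subseteq> set (take (Suc j) as)" by (simp add: set_take_subset_set_take)
    ultimately show ?thesis unfolding X_def by auto
  qed
  then show ?thesis unfolding pth_def kneser_adj_def using False j j_def X_sub[OF t, of "Suc j"] by auto
qed

lemma pth_0: "pth A as bs 0 = A" unfolding pth_def X_def by simp

lemma pth_end: "(A, as, bs) \<in> tup r \<Longrightarrow> pth A as bs (2 * r) = (A - set as) \<union> set bs"
  unfolding pth_def X_def using tupD by simp

lemma pth_conn:
  assumes t: "(A, as, bs) \<in> tup r" and nQ: "\<forall>i\<le>2*r. pth A as bs i \<notin> Q"
  shows "conn kneser_adj (VV - Q) A (pth A as bs (2 * r))"
proof -
  have "m \<le> 2 * r \<Longrightarrow> conn kneser_adj (VV - Q) A (pth A as bs m)" for m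
  proof (induction m)
    case 0 then show ?case using pth_0 by simp
  next
    case (Suc m)
    have "rel kneser_adj (VV - Q) (pth A as bs m) (pth A as bs (Suc m))"
      using pth_in_V[OF t] nQ pth_adj[OF t] Suc.prems unfolding rel_def by simp
    then show ?case using Suc by (simp add: conn_def)
  qed
  then show ?thesis by simp
qed

definition Ls :: "nat set \<Rightarrow> nat \<Rightarrow> nat list set" where
  "Ls S r = {xs. length xs = r \<and> distinct xs \<and> set xs \<subseteq> S}"

lemma Ls_fin: "finite S \<Longrightarrow> finite (Ls S r)"
  unfolding Ls_def by (rule finite_subset[OF _ finite_lists_length_eq[of S r]]) auto

lemma Ls_eq:
  assumes "finite S" "r \<le> card S"
  shows "card (Ls S r) * fact (card S - r) = fact (card S)"
proof -
  have "card (Ls S r) = \<Prod>{card S - r + 1 .. card S}"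
    unfolding Ls_def by (rule card_lists_distinct_length_eq[OF assms])
  also have "\<dots> = fact (card S) div fact (card S - r)"
    using fact_div_fact[of "card S - r" "card S"] by simp
  finally have "card (Ls S r) * fact (card S - r) = fact (card S) div fact (card S - r) * fact (card S - r)"
    by simp
  also have "\<dots> = fact (card S)"
    by (rule dvd_div_mult_self) (rule fact_dvd, simp)
  finally show ?thesis .
qed

lemma Ls_le:
  assumes "finite S"
  shows "card (Ls S r) * fact (card S - r) \<le> fact (card S)"
proof (cases "r \<le> card S")
  case True then show ?thesis using Ls_eq[OF assms] by simp
next
  case False
  have "Ls S r = {}"
  proof (rule ccontr)
    assume "Ls S r \<noteq> {}"
    then obtain xs where "length xs = r" "distinct xs" "set xs \<subseteq> S" unfolding Ls_def by auto
    then have "card (set xs) \<le> card S" "card (set xs) = r" using card_mono[OF assms] distinct_card by auto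
    then have "r \<le> card S" by simp
    then show False using False by simp
  qed
  then show ?thesis by simp
qed

lemma tup_sets:
  assumes t: "(A, as, bs) \<in> tup r"
  shows "set (take j as) \<subseteq> A" "set (drop j as) \<subseteq> A" "set (take j as) \<inter> set (drop j as) = {}"
    "set (take j bs) \<subseteq> U - A" "set (drop j bs) \<subseteq> U - A" "set (take j bs) \<inter> set (drop j bs) = {}"
  using tupD[OF t] set_take_subset[of j as] set_drop_subset[of j as] set_take_subset[of j bs]
    set_drop_subset[of j bs] set_take_disj_set_drop_if_distinct[of as j j]
    set_take_disj_set_drop_if_distinct[of bs j j] by auto

lemma A_recover:
  assumes t: "(A, as, bs) \<in> tup r"
  shows "A = (X A as bs j - set (take j bs)) \<union> set (take j as)"
  using tup_sets[OF t, of j] unfolding X_def by auto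

lemma fiber_even:
  assumes j: "j \<le> r" and v: "v \<in> VV"
  shows "card {(A, as, bs). (A, as, bs) \<in> tup r \<and> X A as bs j = v} * (fact (k - r) * fact (k + 1 - r))
         \<le> fact k * fact (k + 1)"
proof -
  let ?F = "{(A, as, bs). (A, as, bs) \<in> tup r \<and> X A as bs j = v}"
  define \<phi> where "\<phi> = (\<lambda>(A::nat set, as::nat list, bs::nat list). (take j bs @ drop j as, take j as @ drop j bs))"
  have cv: "card v = k" "v \<subseteq> U" using v unfolding kneser_vertices_def by auto
  have cUv: "card (U - v) = k + 1" using cv by (simp add: card_Diff_subset finite_subset)
  have fv: "finite v" using finite_subset[OF cv(2)] by simp
  have inj: "inj_on \<phi> ?F"
  proof (rule inj_onI)
    fix x y assume x: "x \<in> ?F" and y: "y \<in> ?F" and e: "\<phi> x = \<phi> y"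
    obtain A1 as1 bs1 where x1: "x = (A1, as1, bs1)" by (cases x) auto
    obtain A2 as2 bs2 where y1: "y = (A2, as2, bs2)" by (cases y) auto
    have t1: "(A1, as1, bs1) \<in> tup r" "X A1 as1 bs1 j = v" using x x1 by auto
    have t2: "(A2, as2, bs2) \<in> tup r" "X A2 as2 bs2 j = v" using y y1 by auto
    note T1 = tupD[OF t1(1)] and T2 = tupD[OF t2(1)]
    have l: "length (take j bs1) = length (take j bs2)" "length (take j as1) = length (take j as2)"
      using T1 T2 by simp_all
    have "take j bs1 @ drop j as1 = take j bs2 @ drop j as2" "take j as1 @ drop j bs1 = take j as2 @ drop j bs2"
      using e x1 y1 unfolding \<phi>_def by simp_all
    then have eqs: "take j bs1 = take j bs2" "drop j as1 = drop j as2" "take j as1 = take j as2" "drop j bs1 = drop j bs2"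
      using l by simp_all
    have "as1 = as2" using eqs(2,3) by (metis append_take_drop_id)
    moreover have "bs1 = bs2" using eqs(1,4) by (metis append_take_drop_id)
    moreover have "A1 = A2" using A_recover[OF t1(1), of j] A_recover[OF t2(1), of j] t1(2) t2(2) eqs by simp
    ultimately show "x = y" using x1 y1 by simp
  qed
  have img: "\<phi> ` ?F \<subseteq> Ls v r \<times> Ls (U - v) r"
  proof
    fix p assume "p \<in> \<phi> ` ?F"
    then obtain A as bs where t: "(A, as, bs) \<in> tup r" "X A as bs j = v" and p: "p = \<phi> (A, as, bs)" by auto
    note T = tupD[OF t(1)]
    note S = tup_sets[OF t(1), of j]
    have "set (take j bs) \<inter> set (drop j as) = {}" using S by auto
    moreover have "set (drop j as) \<subseteq> v" using S t(2) unfolding X_def by auto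
    moreover have "set (take j bs) \<subseteq> v" using t(2) unfolding X_def by auto
    ultimately have P: "take j bs @ drop j as \<in> Ls v r" unfolding Ls_def using T j by auto
    have "set (take j as) \<inter> set (drop j bs) = {}" using S by auto
    moreover have "set (take j as) \<subseteq> U - v" using S t(2) T(1) unfolding X_def by auto
    moreover have "set (drop j bs) \<subseteq> U - v" using S t(2) unfolding X_def by auto
    ultimately have R: "take j as @ drop j bs \<in> Ls (U - v) r" unfolding Ls_def using T j by auto
    show "p \<in> Ls v r \<times> Ls (U - v) r" using P R p unfolding \<phi>_def by simp
  qed
  have "card ?F \<le> card (Ls v r \<times> Ls (U - v) r)"
    by (rule card_inj_on_le[OF inj img]) (simp add: Ls_fin fv)
  also have "\<dots> = card (Ls v r) * card (Ls (U - v) r)" by (simp add: card_cartesian_product)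
  finally have c: "card ?F \<le> card (Ls v r) * card (Ls (U - v) r)" .
  have "card ?F * (fact (k - r) * fact (k + 1 - r)) \<le>
        (card (Ls v r) * fact (k - r)) * (card (Ls (U - v) r) * fact (k + 1 - r))"
    using mult_le_mono1[OF c, of "fact (k - r) * fact (k + 1 - r)"] by (simp add: ac_simps)
  also have "\<dots> \<le> fact k * fact (k + 1)"
    using Ls_le[OF fv, of r] Ls_le[of "U - v" r] cv cUv by (intro mult_le_mono) auto
  finally show ?thesis .
qed

lemma fiber_odd:
  assumes j: "j < r" and v: "v \<in> VV"
  shows "card {(A, as, bs). (A, as, bs) \<in> tup r \<and> U - (X A as bs j \<union> {bs ! j}) = v}
            * (fact (k - r) * fact (k + 1 - r)) \<le> fact k * fact (k + 1)"
proof -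
  let ?F = "{(A, as, bs). (A, as, bs) \<in> tup r \<and> U - (X A as bs j \<union> {bs ! j}) = v}"
  define \<psi> where "\<psi> = (\<lambda>(A::nat set, as::nat list, bs::nat list).
       (take (Suc j) bs @ drop j as, take j as @ drop (Suc j) bs))"
  have cv: "card v = k" "v \<subseteq> U" using v unfolding kneser_vertices_def by auto
  have cUv: "card (U - v) = k + 1" using cv by (simp add: card_Diff_subset finite_subset)
  have fv: "finite v" using finite_subset[OF cv(2)] by simp
  have wX: "X A as bs j \<union> {bs ! j} = U - v" if t: "(A, as, bs) \<in> tup r" "U - (X A as bs j \<union> {bs ! j}) = v" for A as bs
    using X_sub[OF t(1), of j] bsj_notin(2)[OF t(1) j] t(2) by auto
  have inj: "inj_on \<psi> ?F"
  proof (rule inj_onI)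
    fix x y assume x: "x \<in> ?F" and y: "y \<in> ?F" and e: "\<psi> x = \<psi> y"
    obtain A1 as1 bs1 where x1: "x = (A1, as1, bs1)" by (cases x) auto
    obtain A2 as2 bs2 where y1: "y = (A2, as2, bs2)" by (cases y) auto
    have t1: "(A1, as1, bs1) \<in> tup r" "U - (X A1 as1 bs1 j \<union> {bs1 ! j}) = v" using x x1 by auto
    have t2: "(A2, as2, bs2) \<in> tup r" "U - (X A2 as2 bs2 j \<union> {bs2 ! j}) = v" using y y1 by auto
    note T1 = tupD[OF t1(1)] and T2 = tupD[OF t2(1)]
    have l: "length (take (Suc j) bs1) = length (take (Suc j) bs2)" "length (take j as1) = length (take j as2)"
      using T1 T2 by simp_all
    have "take (Suc j) bs1 @ drop j as1 = take (Suc j) bs2 @ drop j as2"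
         "take j as1 @ drop (Suc j) bs1 = take j as2 @ drop (Suc j) bs2"
      using e x1 y1 unfolding \<psi>_def by simp_all
    then have eqs: "take (Suc j) bs1 = take (Suc j) bs2" "drop j as1 = drop j as2"
        "take j as1 = take j as2" "drop (Suc j) bs1 = drop (Suc j) bs2"
      using l by simp_all
    have as: "as1 = as2" using eqs(2,3) by (metis append_take_drop_id)
    have bs: "bs1 = bs2" using eqs(1,4) by (metis append_take_drop_id)
    have w1: "X A1 as1 bs1 j \<union> {bs1 ! j} = U - v" using wX[OF t1] .
    have w2: "X A2 as2 bs2 j \<union> {bs2 ! j} = U - v" using wX[OF t2] .
    have n1: "bs1 ! j \<notin> X A1 as1 bs1 j" using bsj_notin(1)[OF t1(1) j] .
    have n2: "bs2 ! j \<notin> X A2 as2 bs2 j" using bsj_notin(1)[OF t2(1) j] .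
    have "X A1 as1 bs1 j = (U - v) - {bs1 ! j}" using w1 n1 by auto
    moreover have "X A2 as2 bs2 j = (U - v) - {bs1 ! j}" using w2 n2 bs by auto
    ultimately have Xe: "X A1 as1 bs1 j = X A2 as2 bs2 j" by simp
    have "A1 = A2" using A_recover[OF t1(1), of j] A_recover[OF t2(1), of j] Xe as bs by simp
    then show "x = y" using x1 y1 as bs by simp
  qed
  have img: "\<psi> ` ?F \<subseteq> Ls (U - v) (Suc r) \<times> Ls v (r - 1)"
  proof
    fix p assume "p \<in> \<psi> ` ?F"
    then obtain A as bs where t: "(A, as, bs) \<in> tup r" "U - (X A as bs j \<union> {bs ! j}) = v"
      and p: "p = \<psi> (A, as, bs)" by auto
    note T = tupD[OF t(1)]
    note S = tup_sets[OF t(1), of j]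
    note S1 = tup_sets[OF t(1), of "Suc j"]
    have w: "X A as bs j \<union> {bs ! j} = U - v" using wX[OF t] .
    have tk: "take (Suc j) bs = take j bs @ [bs ! j]" using take_Suc_conv_app_nth[of j bs] j T(6) by simp
    have "set (take (Suc j) bs) \<inter> set (drop j as) = {}" using S S1 by auto
    moreover have "set (drop j as) \<subseteq> U - v" using S w[symmetric] unfolding X_def by auto
    moreover have "set (take (Suc j) bs) \<subseteq> U - v" using w[symmetric] tk unfolding X_def by auto
    moreover have "length (take (Suc j) bs @ drop j as) = Suc r" using T j by simp
    ultimately have P: "take (Suc j) bs @ drop j as \<in> Ls (U - v) (Suc r)" unfolding Ls_def using T by auto
    have "set (take j as) \<inter> set (drop (Suc j) bs) = {}" using S S1 by auto
    moreover have "set (take j as) \<subseteq> v"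
    proof -
      have "set (take j as) \<subseteq> U" using S T(1) by auto
      moreover have bA: "bs ! j \<notin> A"
      proof -
        have "bs ! j \<in> set bs" using nth_mem[of j bs] T(6) j by simp
        then show ?thesis using T(8) by auto
      qed
      moreover have "set (take j as) \<inter> (X A as bs j \<union> {bs ! j}) = {}"
        using S bA unfolding X_def by auto
      ultimately show ?thesis using t(2) by auto
    qed
    moreover have "set (drop (Suc j) bs) \<subseteq> v"
    proof -
      have "set (drop (Suc j) bs) \<subseteq> U" using S1 by auto
      moreover have "set (drop (Suc j) bs) \<inter> (X A as bs j \<union> {bs ! j}) = {}"
        using S1 tk unfolding X_def by auto
      ultimately show ?thesis using t(2) by auto
    qed
    moreover have "length (take j as @ drop (Suc j) bs) = r - 1" using T j by simp
    ultimately have R: "take j as @ drop (Suc j) bs \<in> Ls v (r - 1)" unfolding Ls_def using T by auto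
    show "p \<in> Ls (U - v) (Suc r) \<times> Ls v (r - 1)" using P R p unfolding \<psi>_def by simp
  qed
  have "card ?F \<le> card (Ls (U - v) (Suc r) \<times> Ls v (r - 1))"
    by (rule card_inj_on_le[OF inj img]) (simp add: Ls_fin fv)
  also have "\<dots> = card (Ls (U - v) (Suc r)) * card (Ls v (r - 1))" by (simp add: card_cartesian_product)
  finally have c: "card ?F \<le> card (Ls (U - v) (Suc r)) * card (Ls v (r - 1))" .
  have e1: "k + 1 - Suc r = k - r" by simp
  have e2: "k - (r - 1) = k + 1 - r" using j by simp
  have "card ?F * (fact (k - r) * fact (k + 1 - r)) \<le>
        (card (Ls (U - v) (Suc r)) * fact (k - r)) * (card (Ls v (r - 1)) * fact (k + 1 - r))"
    using mult_le_mono1[OF c, of "fact (k - r) * fact (k + 1 - r)"] by (simp add: ac_simps)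
  also have "\<dots> \<le> fact (k + 1) * fact k"
    using Ls_le[of "U - v" "Suc r"] Ls_le[OF fv, of "r - 1"] cv cUv e1 e2 by (intro mult_le_mono) auto
  finally show ?thesis by (simp add: ac_simps)
qed

lemma VV_fin: "finite VV"
  unfolding kneser_vertices_def by (rule finite_subset[of _ "Pow U"]) auto

definition fib :: "nat \<Rightarrow> nat \<Rightarrow> nat set \<Rightarrow> (nat set \<times> nat list \<times> nat list) set" where
  "fib r i v = {(A, as, bs). (A, as, bs) \<in> tup r \<and> pth A as bs i = v}"

lemma fib_bound:
  assumes i: "i \<le> 2 * r" and v: "v \<in> VV"
  shows "card (fib r i v) * (fact (k - r) * fact (k + 1 - r)) \<le> fact k * fact (k + 1)"
proof (cases "even i")
  case True
  have "fib r i v = {(A, as, bs). (A, as, bs) \<in> tup r \<and> X A as bs (i div 2) = v}"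
    unfolding fib_def pth_def using True by simp
  moreover have "i div 2 \<le> r" using i by simp
  ultimately show ?thesis using fiber_even[OF _ v] by simp
next
  case False
  have "fib r i v = {(A, as, bs). (A, as, bs) \<in> tup r \<and> U - (X A as bs (i div 2) \<union> {bs ! (i div 2)}) = v}"
    unfolding fib_def pth_def using False by simp
  moreover have "i div 2 < r" using i False by presburger
  ultimately show ?thesis using fiber_odd[OF _ v] by simp
qed

definition DPr :: "nat set set \<Rightarrow> nat \<Rightarrow> (nat set \<times> nat set) set" where
  "DPr Q r = {(A, B). A \<in> VV - Q \<and> B \<in> VV - Q \<and> \<not> conn kneser_adj (VV - Q) A B \<and> card (A - B) = r}"

lemma Ls_perm:
  assumes "finite S" "card S = r" "xs \<in> Ls S r"
  shows "set xs = S"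
proof -
  have "set xs \<subseteq> S" "card (set xs) = r" using assms(3) distinct_card unfolding Ls_def by auto
  then show ?thesis using card_subset_eq[OF assms(1)] assms(2) by simp
qed

lemma count_r:
  assumes Q: "Q \<subseteq> VV"
  shows "card (DPr Q r) \<le> (2 * r + 1) * card Q * ((k choose r) * ((k + 1) choose r))"
proof -
  have fQ: "finite Q" using finite_subset[OF Q VV_fin] .
  define G where "G = (\<lambda>(A::nat set, B::nat set). (\<lambda>(as, bs). (A, as, bs)) ` (Ls (A - B) r \<times> Ls (B - A) r))"
  have finDP: "finite (DPr Q r)"
    by (rule finite_subset[of _ "VV \<times> VV"]) (use VV_fin in \<open>auto simp: DPr_def\<close>)
  have pair: "card (A - B) = r" "card (B - A) = r" "finite (A - B)" "finite (B - A)"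
    if p: "(A, B) \<in> DPr Q r" for A B
  proof -
    have AB: "A \<in> VV" "B \<in> VV" "card (A - B) = r" using p unfolding DPr_def by auto
    have fA: "finite A" "finite B" "card A = k" "card B = k"
      using AB(1,2) unfolding kneser_vertices_def by (auto intro: finite_subset)
    have "card (B - A) = card B - card (B \<inter> A)" using fA by (simp add: card_Diff_subset_Int)
    moreover have "card (A - B) = card A - card (A \<inter> B)" using fA by (simp add: card_Diff_subset_Int)
    ultimately show "card (A - B) = r" "card (B - A) = r" "finite (A - B)" "finite (B - A)"
      using AB fA by (simp_all add: Int_commute)
  qed
  have cardG: "card (G p) = fact r * fact r" if p: "p \<in> DPr Q r" for p
  proof -
    obtain A B where AB: "p = (A, B)" by (cases p) auto
    note P = pair[OF p[unfolded AB]]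
    have inj: "inj_on (\<lambda>(as, bs). (A, as, bs)) (Ls (A - B) r \<times> Ls (B - A) r)"
      by (rule inj_onI) auto
    have "card (G p) = card (Ls (A - B) r) * card (Ls (B - A) r)"
      unfolding G_def AB by (simp add: card_image inj_on_def card_cartesian_product)
    moreover have "card (Ls (A - B) r) = fact r" using Ls_eq[OF P(3), of r] P(1) by simp
    moreover have "card (Ls (B - A) r) = fact r" using Ls_eq[OF P(4), of r] P(2) by simp
    ultimately show ?thesis by simp
  qed
  have Gsub: "G p \<subseteq> (\<Union>i\<in>{..2*r}. \<Union>v\<in>Q. fib r i v)" if p: "p \<in> DPr Q r" for p
  proof
    obtain A B where AB: "p = (A, B)" by (cases p) auto
    note P = pair[OF p[unfolded AB]]
    have pAB: "A \<in> VV - Q" "B \<in> VV - Q" "\<not> conn kneser_adj (VV - Q) A B"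
      using p unfolding AB DPr_def by auto
    fix x assume "x \<in> G p"
    then obtain as bs where x: "x = (A, as, bs)" "as \<in> Ls (A - B) r" "bs \<in> Ls (B - A) r"
      unfolding G_def AB by auto
    have sa: "set as = A - B" using Ls_perm[OF P(3) P(1) x(2)] .
    have sb: "set bs = B - A" using Ls_perm[OF P(4) P(2) x(3)] .
    have Bu: "B \<subseteq> U" "A \<subseteq> U" using pAB unfolding kneser_vertices_def by auto
    have t: "(A, as, bs) \<in> tup r" unfolding tup_def using pAB x(2,3) sa sb Bu unfolding Ls_def by auto
    have "pth A as bs (2 * r) = B" using pth_end[OF t] sa sb by auto
    then have "\<not> (\<forall>i\<le>2*r. pth A as bs i \<notin> Q)" using pth_conn[OF t, of Q] pAB(3) by auto
    then obtain i where i: "i \<le> 2 * r" "pth A as bs i \<in> Q" by auto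
    then show "x \<in> (\<Union>i\<in>{..2*r}. \<Union>v\<in>Q. fib r i v)" using t x(1) unfolding fib_def by auto
  qed
  have disj: "\<forall>p\<in>DPr Q r. \<forall>q\<in>DPr Q r. p \<noteq> q \<longrightarrow> G p \<inter> G q = {}"
  proof (intro ballI impI)
    fix p q assume p: "p \<in> DPr Q r" and q: "q \<in> DPr Q r" and pq: "p \<noteq> q"
    obtain A B where AB: "p = (A, B)" by (cases p) auto
    obtain A' B' where AB': "q = (A', B')" by (cases q) auto
    note P = pair[OF p[unfolded AB]] and P' = pair[OF q[unfolded AB']]
    show "G p \<inter> G q = {}"
    proof (rule ccontr)
      assume "G p \<inter> G q \<noteq> {}"
      then obtain A0 as bs where "(A0, as, bs) \<in> G p" "(A0, as, bs) \<in> G q" by auto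
      then have A0: "A0 = A" "A0 = A'" and l: "as \<in> Ls (A - B) r" "bs \<in> Ls (B - A) r"
        "as \<in> Ls (A' - B') r" "bs \<in> Ls (B' - A') r"
        unfolding G_def AB AB' by auto
      have "set as = A - B" "set bs = B - A" "set as = A' - B'" "set bs = B' - A'"
        using Ls_perm[OF P(3) P(1) l(1)] Ls_perm[OF P(4) P(2) l(2)]
          Ls_perm[OF P'(3) P'(1) l(3)] Ls_perm[OF P'(4) P'(2) l(4)] by auto
      then have "B = B'" using A0 by blast
      then show False using pq AB AB' A0 by simp
    qed
  qed
  have finG: "\<forall>p\<in>DPr Q r. finite (G p)"
  proof
    fix p assume "p \<in> DPr Q r"
    then show "finite (G p)" using cardG[of p] by (metis card.infinite fact_nonzero mult_is_0)
  qed
  have "card (DPr Q r) * (fact r * fact r) = (\<Sum>p\<in>DPr Q r. card (G p))"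
    using cardG by simp
  also have "\<dots> = card (\<Union>p\<in>DPr Q r. G p)"
    using card_UN_disjoint[OF finDP finG disj] by simp
  also have "\<dots> \<le> card (\<Union>i\<in>{..2*r}. \<Union>v\<in>Q. fib r i v)"
  proof (rule card_mono)
    show "finite (\<Union>i\<in>{..2*r}. \<Union>v\<in>Q. fib r i v)"
    proof -
      have "fib r i v \<subseteq> tup r" for i v unfolding fib_def by auto
      moreover have "finite (tup r)"
      proof (rule finite_subset)
        show "tup r \<subseteq> VV \<times> Ls U r \<times> Ls U r" unfolding tup_def Ls_def kneser_vertices_def by auto
        show "finite (VV \<times> Ls U r \<times> Ls U r)" using VV_fin Ls_fin[of U r] by simp
      qed
      ultimately show ?thesis by (meson UN_least finite_subset)
    qed
    show "(\<Union>p\<in>DPr Q r. G p) \<subseteq> (\<Union>i\<in>{..2*r}. \<Union>v\<in>Q. fib r i v)" using Gsub by (rule UN_least)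
  qed
  also have "\<dots> \<le> (\<Sum>i\<in>{..2*r}. card (\<Union>v\<in>Q. fib r i v))" by (rule card_UN_le) simp
  also have "\<dots> \<le> (\<Sum>i\<in>{..2*r}. \<Sum>v\<in>Q. card (fib r i v))"
    by (rule sum_mono) (rule card_UN_le[OF fQ])
  finally have c1: "card (DPr Q r) * (fact r * fact r) \<le> (\<Sum>i\<in>{..2*r}. \<Sum>v\<in>Q. card (fib r i v))" .
  define F where "F = (fact (k - r) * fact (k + 1 - r) :: nat)"
  define fk where "fk = (fact k * fact (k + 1) :: nat)"
  have "card (DPr Q r) * (fact r * fact r) * F \<le> (\<Sum>i\<in>{..2*r}. \<Sum>v\<in>Q. card (fib r i v)) * F"
    using c1 by simp
  also have "\<dots> = (\<Sum>i\<in>{..2*r}. \<Sum>v\<in>Q. card (fib r i v) * F)" by (simp add: sum_distrib_right)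
  also have "\<dots> \<le> (\<Sum>i\<in>{..2*r}. \<Sum>v\<in>Q. fk)"
    by (intro sum_mono) (use fib_bound Q in \<open>auto simp: F_def fk_def\<close>)
  also have "\<dots> = (2 * r + 1) * card Q * fk" by (simp add: algebra_simps)
  finally have c2: "card (DPr Q r) * (fact r * fact r * F) \<le> (2 * r + 1) * card Q * fk"
    by (simp add: ac_simps)
  show ?thesis
  proof (cases "r \<le> k")
    case True
    have a: "fact r * fact (k - r) * (k choose r) = fact k" using binomial_fact_lemma[OF True] .
    have b: "fact r * fact (k + 1 - r) * ((k + 1) choose r) = fact (k + 1)"
      using binomial_fact_lemma[of r "k+1"] True by simp
    have "fk = (fact r * fact (k - r) * (k choose r)) * (fact r * fact (k + 1 - r) * ((k + 1) choose r))"
      unfolding fk_def by (subst a, subst b, rule refl)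
    then have "fk = ((k choose r) * ((k + 1) choose r)) * (fact r * fact r * F)"
      unfolding F_def by (simp add: ac_simps)
    then have "card (DPr Q r) * (fact r * fact r * F) \<le>
          ((2 * r + 1) * card Q * ((k choose r) * ((k + 1) choose r))) * (fact r * fact r * F)"
      using c2 by (simp add: ac_simps)
    moreover have "fact r * fact r * F > 0" unfolding F_def by simp
    ultimately show ?thesis by simp
  next
    case False
    have "DPr Q r = {}"
    proof (rule ccontr)
      assume "DPr Q r \<noteq> {}"
      then obtain A B where p: "(A, B) \<in> DPr Q r" by auto
      have "A \<in> VV" using p unfolding DPr_def by auto
      then have "finite A" "card A = k" unfolding kneser_vertices_def by (auto intro: finite_subset)
      then have "card (A - B) \<le> k" by (metis card_mono Diff_subset)
      then show False using pair[OF p] False by simp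
    qed
    then show ?thesis by simp
  qed
qed

lemma vsum: "(\<Sum>r\<le>k. (k choose r) * ((k + 1) choose r)) \<le> (2 * k + 1) choose k"
proof -
  have "(\<Sum>r\<le>k. (k choose r) * ((k + 1) choose r)) \<le> (\<Sum>r\<le>k+1. (k choose r) * ((k + 1) choose r))"
    by (rule sum_mono2) auto
  also have "\<dots> = (\<Sum>r\<le>k+1. (k choose r) * ((k + 1) choose (k + 1 - r)))"
    by (rule sum.cong) (auto simp: binomial_symmetric[symmetric])
  also have "\<dots> = (k + (k + 1)) choose (k + 1)" by (rule vandermonde)
  also have "\<dots> = (2 * k + 1) choose (k + 1)" by (simp add: mult_2)
  also have "\<dots> = (2 * k + 1) choose k"
    using binomial_symmetric[of k "2 * k + 1"] by (simp del: binomial_Suc_Suc)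
  finally show ?thesis .
qed

definition DP :: "nat set set \<Rightarrow> (nat set \<times> nat set) set" where
  "DP Q = {(A, B). A \<in> VV - Q \<and> B \<in> VV - Q \<and> \<not> conn kneser_adj (VV - Q) A B}"

lemma sep:
  assumes Q: "Q \<subseteq> VV"
  shows "card (DP Q) \<le> (2 * k + 1) * card Q * ((2 * k + 1) choose k)"
proof -
  have "DP Q \<subseteq> (\<Union>r\<in>{..k}. DPr Q r)"
  proof
    fix p assume p: "p \<in> DP Q"
    obtain A B where AB: "p = (A, B)" by (cases p) auto
    have "A \<in> VV" using p AB unfolding DP_def by auto
    then have "finite A" "card A = k" unfolding kneser_vertices_def by (auto intro: finite_subset)
    then have "card (A - B) \<le> k" by (metis card_mono Diff_subset)
    then show "p \<in> (\<Union>r\<in>{..k}. DPr Q r)" using p AB unfolding DP_def DPr_def by auto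
  qed
  then have "card (DP Q) \<le> card (\<Union>r\<in>{..k}. DPr Q r)"
  proof (rule card_mono[rotated])
    show "finite (\<Union>r\<in>{..k}. DPr Q r)"
      by (rule finite_subset[of _ "VV \<times> VV"]) (use VV_fin in \<open>auto simp: DPr_def\<close>)
  qed
  also have "\<dots> \<le> (\<Sum>r\<le>k. card (DPr Q r))" by (rule card_UN_le) simp
  also have "\<dots> \<le> (\<Sum>r\<le>k. (2 * r + 1) * card Q * ((k choose r) * ((k + 1) choose r)))"
    by (rule sum_mono) (rule count_r[OF Q])
  also have "\<dots> \<le> (\<Sum>r\<le>k. (2 * k + 1) * card Q * ((k choose r) * ((k + 1) choose r)))"
    by (rule sum_mono) (intro mult_le_mono; simp)
  also have "\<dots> = (2 * k + 1) * card Q * (\<Sum>r\<le>k. (k choose r) * ((k + 1) choose r))"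
    by (simp add: sum_distrib_left)
  also have "\<dots> \<le> (2 * k + 1) * card Q * ((2 * k + 1) choose k)"
    using vsum by (intro mult_le_mono) auto
  finally show ?thesis .
qed

end


context oddg
begin

lemma card_VV: "card VV = (2 * k + 1) choose k"
  unfolding kneser_vertices_def using n_subsets[of "{..<2*k+1}" k] by simp

lemma lsg_odd: "lsg VV kneser_adj"
proof
  show "finite VV" by (rule VV_fin)
  show "kneser_adj x y \<Longrightarrow> kneser_adj y x" for x y unfolding kneser_adj_def by auto
  show "\<exists>w\<in>VV. kneser_adj v w \<and> w \<noteq> v" if v: "v \<in> VV" for v
  proof -
    have vU: "v \<subseteq> U" "card v = k" using v unfolding kneser_vertices_def by auto
    have cc: "card (U - v) = k + 1" using vU by (simp add: card_Diff_subset finite_subset)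
    have "U - v \<noteq> {}"
    proof
      assume h: "U - v = {}"
      have c0: "card (U - v) = 0" by (simp only: h card.empty)
      then show False using cc by linarith
    qed
    then obtain x where x: "x \<in> U - v" by blast
    define w where "w = U - v - {x}"
    have "card w = k" unfolding w_def using cc x by (simp add: card_Diff_singleton)
    then have wV: "w \<in> VV" unfolding w_def kneser_vertices_def by auto
    have adj: "kneser_adj v w" unfolding kneser_adj_def w_def by auto
    have "v \<noteq> {}" using vU k1 by auto
    then have "w \<noteq> v" using adj unfolding kneser_adj_def by auto
    then show ?thesis using wV adj by blast
  qed
  show "VV \<noteq> {}"
  proof -
    have "{..<k} \<in> VV" unfolding kneser_vertices_def by auto
    then show ?thesis by blast
  qed
  show "conn kneser_adj VV x y" if x: "x \<in> VV" and y: "y \<in> VV" for x y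
  proof -
    have fx: "finite x" "finite y" "card x = k" "card y = k" "x \<subseteq> U" "y \<subseteq> U"
      using x y unfolding kneser_vertices_def by (auto intro: finite_subset)
    obtain as where as: "set as = x - y" "distinct as" using finite_distinct_list[of "x - y"] fx(1) by auto
    obtain bs where bs: "set bs = y - x" "distinct bs" using finite_distinct_list[of "y - x"] fx(2) by auto
    have "card (x - y) = card (y - x)"
      using fx by (simp add: card_Diff_subset_Int Int_commute)
    then have len: "length as = length bs" using as bs distinct_card by metis
    have t: "(x, as, bs) \<in> tup (length as)" unfolding tup_def using x as bs len fx by auto
    have e: "pth x as bs (2 * length as) = y" using pth_end[OF t] as bs by auto
    have "conn kneser_adj (VV - {}) x (pth x as bs (2 * length as))" by (rule pth_conn[OF t]) simp
    then show ?thesis using e by simp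
  qed
qed

lemma Q_bound:
  assumes Q: "Q \<subseteq> VV" and sm: "\<forall>u\<in>VV - Q. 2 * card (gcomp kneser_adj (VV - Q) u) \<le> card VV"
  shows "3 * card VV \<le> 16 * (2 * k + 1) * card Q"
proof -
  define N where "N = card VV"
  define S where "S = VV - Q"
  define q where "q = card Q"
  have fS: "finite S" unfolding S_def using VV_fin by simp
  have sN: "card S = N - q" "q \<le> N" unfolding S_def N_def q_def
    using card_Diff_subset[OF finite_subset[OF Q VV_fin] Q] card_mono[OF VV_fin Q] by auto
  have DPe: "DP Q = Sigma S (\<lambda>u. S - gcomp kneser_adj S u)"
    unfolding DP_def S_def gcomp_def by auto
  have "card (DP Q) = (\<Sum>u\<in>S. card (S - gcomp kneser_adj S u))"
    unfolding DPe using fS by (simp add: card_SigmaI)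
  also have "\<dots> = (\<Sum>u\<in>S. card S - card (gcomp kneser_adj S u))"
    by (rule sum.cong) (use card_Diff_subset[OF finite_subset[OF comp_sub fS] comp_sub] in auto)
  finally have cDP: "card (DP Q) = (\<Sum>u\<in>S. card S - card (gcomp kneser_adj S u))" .
  have "(\<Sum>u\<in>S. 2 * card S - N) \<le> (\<Sum>u\<in>S. 2 * (card S - card (gcomp kneser_adj S u)))"
  proof (rule sum_mono)
    fix u assume "u \<in> S"
    then have "2 * card (gcomp kneser_adj S u) \<le> N" using sm unfolding S_def N_def by blast
    then show "2 * card S - N \<le> 2 * (card S - card (gcomp kneser_adj S u))" by linarith
  qed
  then have low: "card S * (2 * card S - N) \<le> 2 * card (DP Q)"
    unfolding cDP by (simp add: sum_distrib_left)
  have up: "card (DP Q) \<le> (2 * k + 1) * q * N" using sep[OF Q] card_VV unfolding q_def N_def by simp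
  show ?thesis
  proof (cases "N \<le> 4 * q")
    case True
    have "3 * N \<le> 16 * q" using True by linarith
    also have "\<dots> \<le> 16 * (2 * k + 1) * q" by simp
    finally show ?thesis unfolding N_def q_def .
  next
    case False
    then have h: "4 * q < N" by simp
    have r1: "real (card S * (2 * card S - N)) = (real N - real q) * (real N - 2 * real q)"
      using sN h by (simp add: of_nat_diff)
    have "(real N - real q) * (real N - 2 * real q) \<le> 2 * ((2 * real k + 1) * real q * real N)"
    proof -
      have "real (card S * (2 * card S - N)) \<le> real (2 * ((2 * k + 1) * q * N))"
        using low up by linarith
      then show ?thesis unfolding r1 by (simp add: algebra_simps)
    qed
    moreover have "(3 * real N / 4) * (real N / 2) \<le> (real N - real q) * (real N - 2 * real q)"
      using h by (intro mult_mono) auto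
    ultimately have "3 * real N * real N \<le> 16 * ((2 * real k + 1) * real q) * real N" by simp
    moreover have "real N > 0" using h by simp
    ultimately have "3 * real N \<le> 16 * ((2 * real k + 1) * real q)" by simp
    then have "real (3 * N) \<le> real (16 * (2 * k + 1) * q)" by (simp add: algebra_simps)
    then show ?thesis unfolding N_def q_def by linarith
  qed
qed

lemma D_bound: "3 * card VV \<le> 16 * (2 * k + 1) * D_LS VV kneser_adj"
proof -
  obtain Q where Q: "Q \<subseteq> VV" "\<forall>u\<in>VV - Q. 2 * card (gcomp kneser_adj (VV - Q) u) \<le> card VV"
     "card Q \<le> D_LS VV kneser_adj"
    using lsg.D_LS_Q[OF lsg_odd] by blast
  have "3 * card VV \<le> 16 * (2 * k + 1) * card Q" by (rule Q_bound[OF Q(1,2)])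
  also have "\<dots> \<le> 16 * (2 * k + 1) * D_LS VV kneser_adj" using Q(3) by simp
  finally show ?thesis .
qed

end

theorem theorem3p5:
  shows "(\<lambda>k. real (D_LS (kneser_vertices (2*k+1) k) kneser_adj))
           \<in> \<Omega>(\<lambda>k. real ((2*k+1) choose k) / real k)"
proof -
  have ev: "eventually (\<lambda>k. norm (real ((2*k+1) choose k) / real k)
        \<le> 16 * norm (real (D_LS (kneser_vertices (2*k+1) k) kneser_adj))) at_top"
  proof (rule eventually_at_top_linorderI[of 1])
    fix k :: nat assume k: "1 \<le> k"
    interpret oddg k using k by unfold_locales
    have b: "3 * ((2 * k + 1) choose k) \<le> 16 * (2 * k + 1) * D_LS VV kneser_adj"
      using D_bound card_VV by simp
    define C where "C = real ((2*k+1) choose k)"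
    define D where "D = real (D_LS VV kneser_adj)"
    have b': "3 * C \<le> 16 * (2 * real k + 1) * D"
    proof -
      have "real (3 * ((2 * k + 1) choose k)) \<le> real (16 * (2 * k + 1) * D_LS VV kneser_adj)"
        using b by linarith
      then show ?thesis unfolding C_def D_def by (simp add: algebra_simps)
    qed
    have kp: "real k \<ge> 1" using k by simp
    have D0: "D \<ge> 0" unfolding D_def by simp
    have "16 * (2 * real k + 1) * D \<le> 16 * (3 * real k) * D" using kp D0 by (intro mult_right_mono) auto
    then have "C \<le> 16 * real k * D" using b' by linarith
    then have "C / real k \<le> 16 * D" using kp by (simp add: field_simps)
    then show "norm (real ((2*k+1) choose k) / real k) \<le> 16 * norm (real (D_LS VV kneser_adj))"
      unfolding C_def D_def by simp
  qed
  have "(\<lambda>k. real ((2*k+1) choose k) / real k) \<in> O(\<lambda>k. real (D_LS (kneser_vertices (2*k+1) k) kneser_adj))"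
    by (rule bigoI[OF ev])
  then show ?thesis by (simp add: bigomega_iff_bigo)
qed


end
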